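(* Let $\mathbb{M}_1=(X,\mathcal{I}_1)$, $\mathbb{M}_2=(X,\mathcal{I}_2)$ be matroids on a finite set $X$, let $B$ be a common basis, let $\delta\ge0$, and let $A_1,A_2$ be the arc sets of the exchange graph of $B$ (see context). For a weight function $w':X\to\mathbb{R}_{\ge0}$, define arc lengths $l_{xy}=w'(x)$ for $(x,y)\in A_1$ and $l_{yx}=-w'(y)$ for $(y,x)\in A_2$. Then $B$ is $\delta$-optimal under $w'$ (i.e. $w'(B)\ge w'(B')+\delta$ for every common basis $B'\ne B$) if and only if there exist real numbers $d_{xy}$, $x,y\in X$, such that $d_{xy}\le l_{xy}$ for all $(x,y)\in A_1\cup A_2$, $d_{xz}\le d_{xy}+l_{yz}$ for all $x,z\in X$ and all $(y,z)\in A_1\cup A_2$, and $d_{xx}\ge\delta$ for all $x\in X$. Consequently, the problem of finding $w'$ minimizing $\sum_{e\in X}(w'(e)-w(e))^2$ such that $B$ is $\delta$-optimal under $w'$ is equivalent to a quadratic program with linear constraints in the variables $w'$, $l$, $d$.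
   Context: $w'(S)=\sum_{x\in S}w'(x)$. The exchange graph of $B$ has vertex set $X$ and arcs $A_1=\{(x,y): x\in B,\ y\in X\setminus B,\ B-\{x\}+\{y\}\in\mathcal{I}_1\}$ and $A_2=\{(y,x): x\in B,\ y\in X\setminus B,\ B-\{x\}+\{y\}\in\mathcal{I}_2\}$. *)

theory Defs
  imports Complex_Main
begin

definition matroid :: "'a set \<Rightarrow> 'a set set \<Rightarrow> bool" where
  "matroid X I \<longleftrightarrow>
     finite X \<and> (\<forall>A\<in>I. A \<subseteq> X) \<and> {} \<in> I \<and>
     (\<forall>A B. B \<in> I \<and> A \<subseteq> B \<longrightarrow> A \<in> I) \<and>
     (\<forall>A B. A \<in> I \<and> B \<in> I \<and> card A < card B \<longrightarrow> (\<exists>e\<in>B - A. insert e A \<in> I))"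

definition basis :: "'a set set \<Rightarrow> 'a set \<Rightarrow> bool" where
  "basis I B \<longleftrightarrow> B \<in> I \<and> (\<forall>C\<in>I. B \<subseteq> C \<longrightarrow> C = B)"

definition common_basis :: "'a set set \<Rightarrow> 'a set set \<Rightarrow> 'a set \<Rightarrow> bool" where
  "common_basis I1 I2 B \<longleftrightarrow> basis I1 B \<and> basis I2 B"

definition exch_A1 :: "'a set \<Rightarrow> 'a set set \<Rightarrow> 'a set \<Rightarrow> ('a \<times> 'a) set" where
  "exch_A1 X I1 B = {(x, y). x \<in> B \<and> y \<in> X - B \<and> insert y (B - {x}) \<in> I1}"

definition exch_A2 :: "'a set \<Rightarrow> 'a set set \<Rightarrow> 'a set \<Rightarrow> ('a \<times> 'a) set" where
  "exch_A2 X I2 B = {(y, x). x \<in> B \<and> y \<in> X - B \<and> insert y (B - {x}) \<in> I2}"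

definition arc_len :: "'a set \<Rightarrow> 'a set set \<Rightarrow> 'a set set \<Rightarrow> 'a set \<Rightarrow> ('a \<Rightarrow> real) \<Rightarrow> 'a \<Rightarrow> 'a \<Rightarrow> real" where
  "arc_len X I1 I2 B w u v =
     (if (u, v) \<in> exch_A1 X I1 B then w u
      else if (u, v) \<in> exch_A2 X I2 B then - w u else 0)"

definition delta_optimal :: "'a set set \<Rightarrow> 'a set set \<Rightarrow> ('a \<Rightarrow> real) \<Rightarrow> real \<Rightarrow> 'a set \<Rightarrow> bool" where
  "delta_optimal I1 I2 w \<delta> B \<longleftrightarrow>
     (\<forall>B'. common_basis I1 I2 B' \<and> B' \<noteq> B \<longrightarrow> sum w B \<ge> sum w B' + \<delta>)"

end

theory Submission
  imports Defs "HOL-Library.FuncSet"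
begin

lemma sum_split_add: "(\<Sum>t<p+q. f t) = (\<Sum>t<p. f t) + (\<Sum>t<q. f (p+t))"
  for f :: "nat \<Rightarrow> 'b::comm_monoid_add"
  by (induction q) (simp_all add: add.assoc)

locale matr = fixes X :: "'a set" and F :: "'a set set" assumes mat: "matroid X F"
begin

lemma fin: "finite X" using mat unfolding matroid_def by auto
lemma sub: "A \<in> F \<Longrightarrow> A \<subseteq> X" using mat unfolding matroid_def by auto
lemma finI: "A \<in> F \<Longrightarrow> finite A" using sub fin finite_subset by blast
lemma down: "B \<in> F \<Longrightarrow> A \<subseteq> B \<Longrightarrow> A \<in> F" using mat unfolding matroid_def by blast
lemma aug: "A \<in> F \<Longrightarrow> B \<in> F \<Longrightarrow> card A < card B \<Longrightarrow> \<exists>e\<in>B - A. insert e A \<in> F"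
  using mat unfolding matroid_def by blast

lemma extend:
  assumes "T \<in> F" "S \<in> F" "card T \<le> card S"
  shows "\<exists>T'. T \<subseteq> T' \<and> T' \<subseteq> T \<union> S \<and> card T' = card S \<and> T' \<in> F"
  using assms
proof (induction "card S - card T" arbitrary: T)
  case 0 then show ?case by (intro exI[of _ T]) auto
next
  case (Suc n)
  then have "card T < card S" by linarith
  then obtain e where e: "e \<in> S - T" "insert e T \<in> F" using aug Suc.prems by blast
  have ft: "finite T" using finI Suc.prems by blast
  have c: "card (insert e T) = Suc (card T)" using e ft by simp
  have "n = card S - card (insert e T)" using Suc.hyps c by linarith
  from Suc.hyps(1)[OF this e(2) Suc.prems(2)] c \<open>card T < card S\<close>
  obtain T' where "insert e T \<subseteq> T'" "T' \<subseteq> insert e T \<union> S" "card T' = card S" "T' \<in> F" by auto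
  then show ?case using e by (intro exI[of _ T']) auto
qed

lemma basis_card:
  assumes "basis F B" "basis F B'" shows "card B = card B'"
proof -
  have "\<not> card B < card B'" if h: "basis F B" "basis F B'" for B B'
  proof
    assume "card B < card B'"
    then obtain e where "e \<in> B' - B" "insert e B \<in> F" using aug[of B B'] h unfolding basis_def by blast
    then show False using h unfolding basis_def by blast
  qed
  then show ?thesis using assms by (meson linorder_neqE_nat)
qed

lemma basis_of_card:
  assumes "basis F B" "J \<in> F" "card J = card B" shows "basis F J"
  unfolding basis_def
proof (intro conjI ballI impI)
  show "J \<in> F" by fact
  fix C assume C: "C \<in> F" "J \<subseteq> C"
  show "C = J"
  proof (rule ccontr)
    assume "C \<noteq> J"
    then have "card J < card C" using C finI psubset_card_mono by blast
    then obtain e where "e \<in> C - B" "insert e B \<in> F" using aug[of B C] assms C unfolding basis_def by auto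
    then show False using assms unfolding basis_def by blast
  qed
qed

lemma sym_exchange:
  assumes I: "I \<in> F" and J: "J \<in> F" and cIJ: "card I = card J" and y: "y \<in> J - I"
  shows "\<exists>x\<in>I - J. insert y (I - {x}) \<in> F \<and> insert x (J - {y}) \<in> F"
proof -
  have fI: "finite I" and fJ: "finite J" using I J finI by auto
  have "card J > 0" using y fJ card_gt_0_iff by blast
  then have cJy: "card (J - {y}) < card I" using y fJ cIJ by (simp add: card_Diff_singleton)
  have Jy: "J - {y} \<in> F" using down J by blast
  obtain e where e: "e \<in> I - (J - {y})" "insert e (J - {y}) \<in> F" using aug[OF Jy I cJy] by blast
  have eIJ: "e \<in> I - J" using e y by auto
  show ?thesis
  proof (cases "insert y I \<in> F")
    case True
    have "insert y (I - {e}) \<in> F" by (rule down[OF True]) auto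
    then show ?thesis using eIJ e by blast
  next
    case False
    define A where "A = {x\<in>I - J. insert x (J - {y}) \<in> F}"
    have eA: "e \<in> A" using eIJ e unfolding A_def by auto
    show ?thesis
    proof (rule ccontr)
      assume nc: "\<not> ?thesis"
      then have nA: "\<And>x. x \<in> A \<Longrightarrow> insert y (I - {x}) \<notin> F" unfolding A_def by blast
      have c1: "insert y (I - A) \<notin> F"
      proof
        assume T: "insert y (I - A) \<in> F"
        have yIA: "y \<notin> I - A" using y by auto
        have "card (I - A) < card I" using eA fI unfolding A_def
          by (metis (no_types, lifting) Diff_iff Diff_subset card_seteq leI mem_Collect_eq subsetI)
        then have "card (insert y (I - A)) \<le> card I" using yIA fI by simp
        then obtain T' where T': "insert y (I - A) \<subseteq> T'" "T' \<subseteq> insert y (I - A) \<union> I"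
          "card T' = card I" "T' \<in> F" using extend[OF T I] by blast
        have sub': "T' \<subseteq> insert y I" using T' by auto
        have "card T' < card (insert y I)" using T'(3) y fI by simp
        then have "\<not> insert y I \<subseteq> T'" using card_mono[OF finI[OF T'(4)]] by (meson not_le)
        then obtain x where x: "x \<in> insert y I" "x \<notin> T'" by blast
        have xy: "x \<noteq> y" using x T' by auto
        have xI: "x \<in> I" using x xy by auto
        have xA: "x \<in> A" using x T'(1) xI by auto
        have "T' \<subseteq> insert y (I - {x})" using sub' x by auto
        moreover have "card (insert y (I - {x})) = card T'" using T'(3) xI y fI
          by (simp add: card_Diff_singleton card_gt_0_iff) (metis Suc_pred card_gt_0_iff empty_iff)
        ultimately have "T' = insert y (I - {x})" using fI by (intro card_subset_eq) auto
        then show False using nA[OF xA] T'(4) by simp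
      qed
      define U where "U = (J - {y}) \<union> (I - A)"
      have c2: "card T \<le> card (J - {y})" if hT: "T \<subseteq> U" "T \<in> F" for T
      proof (rule ccontr)
        assume "\<not> ?thesis"
        then obtain f where f: "f \<in> T - (J - {y})" "insert f (J - {y}) \<in> F" using aug[OF Jy hT(2)] by auto
        have "f \<in> I - A" using f hT U_def by auto
        moreover have "f \<notin> J" using f y \<open>f \<in> I - A\<close> by auto
        ultimately have "f \<in> A" using f unfolding A_def by auto
        then show False using \<open>f \<in> I - A\<close> by auto
      qed
      have IA: "I - A \<in> F" using down I by blast
      have "card (I - A) \<le> card (J - {y})" using c2[OF _ IA] U_def by auto
      then obtain T where T: "I - A \<subseteq> T" "T \<subseteq> (I - A) \<union> (J - {y})" "card T = card (J - {y})" "T \<in> F"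
        using extend[OF IA Jy] by blast
      have "card T < card J" using T(3) cJy cIJ by simp
      then obtain f where f: "f \<in> J - T" "insert f T \<in> F" using aug[OF T(4) J] by blast
      show False
      proof (cases "f = y")
        case True
        have "insert y (I - A) \<subseteq> insert f T" using T(1) True by auto
        then have "insert y (I - A) \<in> F" using down[OF f(2)] by blast
        then show False using c1 by simp
      next
        case False
        have "insert f T \<subseteq> U" using T(2) f False U_def by auto
        from c2[OF this f(2)] have "card (insert f T) \<le> card (J - {y})" .
        moreover have "card (insert f T) = Suc (card T)" using f finI[OF T(4)] by simp
        ultimately show False using T(3) by simp
      qed
    qed
  qed
qed

lemma matching:
  assumes "I \<in> F" "J \<in> F" "card I = card J"
  shows "\<exists>f. bij_betw f (J - I) (I - J) \<and> (\<forall>y\<in>J - I. insert y (I - {f y}) \<in> F)"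
  using assms
proof (induction "card (J - I)" arbitrary: J)
  case 0
  have "J - I = {}" using 0 finI[OF 0(3)] by simp
  then have "J \<subseteq> I" by auto
  then have "J = I" using 0 finI by (metis card_subset_eq)
  then show ?case by (simp add: bij_betw_def)
next
  case (Suc n)
  then obtain y where y: "y \<in> J - I" by (metis card.empty ex_in_conv nat.distinct(1))
  obtain x where x: "x \<in> I - J" "insert y (I - {x}) \<in> F" "insert x (J - {y}) \<in> F"
    using sym_exchange[OF Suc.prems y] by blast
  define J' where "J' = insert x (J - {y})"
  have fJ: "finite J" using finI Suc.prems by auto
  have "card J > 0" using y fJ card_gt_0_iff by blast
  then have cJ': "card J' = card J" using x y fJ unfolding J'_def by (simp add: card_Diff_singleton)
  have J'I: "J' - I = (J - I) - {y}" using x y unfolding J'_def by auto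
  have IJ': "I - J' = (I - J) - {x}" using x y unfolding J'_def by auto
  have "n = card (J' - I)" using Suc.hyps(2) J'I y fJ by (simp add: card_Diff_singleton)
  from Suc.hyps(1)[OF this Suc.prems(1) x(3)[folded J'_def]] cJ' Suc.prems(3)
  obtain f where f: "bij_betw f (J' - I) (I - J')" "\<forall>y\<in>J' - I. insert y (I - {f y}) \<in> F" by auto
  define g where "g = f(y := x)"
  have "bij_betw g (J - I) (I - J)"
  proof -
    have "bij_betw g (J' - I) (I - J')" using f(1) unfolding g_def J'I
      by (metis DiffE bij_betw_cong fun_upd_other singletonI)
    moreover have "J - I = insert y (J' - I)" "I - J = insert x (I - J')" "y \<notin> J' - I" "x \<notin> I - J'"
      using J'I IJ' x y by auto
    moreover have "g y = x" unfolding g_def by simp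
    moreover have "bij_betw g {y} {x}" using \<open>g y = x\<close> by (simp add: bij_betw_def)
    ultimately have "bij_betw g ((J' - I) \<union> {y}) ((I - J') \<union> {x})"
      by (intro bij_betw_combine) auto
    then show ?thesis using \<open>J - I = insert y (J' - I)\<close> \<open>I - J = insert x (I - J')\<close> by simp
  qed
  moreover have "\<forall>z\<in>J - I. insert z (I - {g z}) \<in> F"
    using f(2) x(2) J'I unfolding g_def by auto
  ultimately show ?case by blast
qed

end

context matr begin

lemma exch_equiv:
  assumes B: "B \<in> F" and B1: "insert ys (B - {xs}) \<in> F" and xs: "xs \<in> B" and ysB: "ys \<notin> B"
    and no: "insert y (B - {xs}) \<notin> F"
    and e: "e \<in> B" "e \<noteq> xs" and y: "y \<notin> B" "y \<noteq> ys"
  shows "insert y (B - {e}) \<in> F \<longleftrightarrow> insert y (insert ys (B - {xs}) - {e}) \<in> F"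
proof
  have fB: "finite B" using finI B by auto
  have cB: "card B > 0" using xs fB card_gt_0_iff by blast
  assume T: "insert y (B - {e}) \<in> F"
  define T' where "T' = insert y (B - {e, xs})"
  have T'F: "T' \<in> F" by (rule down[OF T]) (auto simp: T'_def)
  have c2: "card {e, xs} \<le> card B" using e xs fB by (intro card_mono) auto
  have "card T' = card B - 1" unfolding T'_def using fB e xs y c2
    by (simp add: card_Diff_subset)
  moreover have "card (insert ys (B - {xs})) = card B" using fB xs ysB cB by (simp add: card_Diff_singleton)
  ultimately have "card T' < card (insert ys (B - {xs}))" using cB by simp
  then obtain f where f: "f \<in> insert ys (B - {xs}) - T'" "insert f T' \<in> F" using aug[OF T'F B1] by blast
  have "f = ys \<or> f = e" using f unfolding T'_def by auto
  then show "insert y (insert ys (B - {xs}) - {e}) \<in> F"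
  proof
    assume "f = ys"
    moreover have "insert ys T' = insert y (insert ys (B - {xs}) - {e})" unfolding T'_def using e y ysB by auto
    ultimately show ?thesis using f by simp
  next
    assume "f = e"
    moreover have "insert e T' = insert y (B - {xs})" unfolding T'_def using e by auto
    ultimately show ?thesis using f no by simp
  qed
next
  have fB: "finite B" using finI B by auto
  have cB: "card B > 0" using xs fB card_gt_0_iff by blast
  assume T: "insert y (insert ys (B - {xs}) - {e}) \<in> F"
  define U where "U = insert y (B - {xs, e})"
  have UF: "U \<in> F" by (rule down[OF T]) (auto simp: U_def)
  have c2: "card {xs, e} \<le> card B" using e xs fB by (intro card_mono) auto
  have "card U = card B - 1" unfolding U_def using fB e xs y c2
    by (simp add: card_Diff_subset)
  then have "card U < card B" using cB by simp
  then obtain f where f: "f \<in> B - U" "insert f U \<in> F" using aug[OF UF B] by blast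
  have "f = xs \<or> f = e" using f unfolding U_def by auto
  then show "insert y (B - {e}) \<in> F"
  proof
    assume "f = xs"
    moreover have "insert xs U = insert y (B - {e})" unfolding U_def using e xs by auto
    ultimately show ?thesis using f by simp
  next
    assume "f = e"
    moreover have "insert e U = insert y (B - {xs})" unfolding U_def using e by auto
    ultimately show ?thesis using f no by simp
  qed
qed

lemma triangular:
  assumes "B \<in> F" "finite K" "inj_on x K" "inj_on y K" "x ` K \<subseteq> B" "y ` K \<inter> B = {}"
    and "\<forall>i\<in>K. insert (y i) (B - {x i}) \<in> F"
    and "\<forall>i\<in>K. \<forall>j\<in>K. i \<noteq> j \<and> insert (y j) (B - {x i}) \<in> F \<longrightarrow> (\<Phi> j :: real) < \<Phi> i"
  shows "(B - x ` K) \<union> y ` K \<in> F"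
  using assms
proof (induction "card K" arbitrary: B K)
  case 0
  then show ?case by simp
next
  case (Suc n)
  then have "K \<noteq> {}" by auto
  have "Min (\<Phi> ` K) \<in> \<Phi> ` K" using Suc.prems(2) \<open>K \<noteq> {}\<close> by (intro Min_in) auto
  then obtain s where s0: "s \<in> K" "\<Phi> s = Min (\<Phi> ` K)" by auto
  have s: "s \<in> K" "\<forall>i\<in>K. \<Phi> s \<le> \<Phi> i" using s0 Suc.prems(2) by auto
  define B1 where "B1 = insert (y s) (B - {x s})"
  define K' where "K' = K - {s}"
  have xsB: "x s \<in> B" and ysB: "y s \<notin> B" using s Suc.prems by auto
  have B1F: "B1 \<in> F" using Suc.prems(7) s unfolding B1_def by auto
  have no: "insert (y j) (B - {x s}) \<notin> F" if "j \<in> K" "j \<noteq> s" for j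
  proof
    assume h: "insert (y j) (B - {x s}) \<in> F"
    have "s \<noteq> j" using that by auto
    then have "\<Phi> j < \<Phi> s" using Suc.prems(8) s(1) that(1) h by auto
    moreover have "\<Phi> s \<le> \<Phi> j" using s(2) that by blast
    ultimately show False by simp
  qed
  have eq: "insert (y j) (B - {x i}) \<in> F \<longleftrightarrow> insert (y j) (B1 - {x i}) \<in> F" if "i \<in> K'" "j \<in> K'" for i j
  proof -
    have ij: "i \<in> K" "j \<in> K" "i \<noteq> s" "j \<noteq> s" using that K'_def by auto
    have "x i \<noteq> x s" using Suc.prems(3) ij s(1) by (meson inj_on_eq_iff)
    moreover have "y j \<noteq> y s" using Suc.prems(4) ij s(1) by (meson inj_on_eq_iff)
    moreover have "x i \<in> B" "y j \<notin> B" using ij Suc.prems(5,6) by auto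
    ultimately show ?thesis unfolding B1_def
      using exch_equiv[OF Suc.prems(1) B1F[unfolded B1_def] xsB ysB no[OF ij(2) ij(4)]]
      by blast
  qed
  have "(B1 - x ` K') \<union> y ` K' \<in> F"
  proof (rule Suc.hyps(1))
    show "n = card K'" using Suc.hyps(2) s K'_def by simp
    show "B1 \<in> F" by fact
    show "finite K'" using Suc.prems(2) K'_def by auto
    show "inj_on x K'" using Suc.prems(3) K'_def inj_on_subset by blast
    show "inj_on y K'" using Suc.prems(4) K'_def inj_on_subset by blast
    have xne: "x i \<noteq> x s" "y i \<noteq> y s" if "i \<in> K'" for i
    proof -
      have "i \<in> K" "i \<noteq> s" using that K'_def by auto
      then show "x i \<noteq> x s" "y i \<noteq> y s" using s(1) Suc.prems(3,4) inj_on_eq_iff by metis+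
    qed
    show "x ` K' \<subseteq> B1"
    proof
      fix z assume "z \<in> x ` K'"
      then obtain i where "i \<in> K'" "z = x i" by blast
      moreover have "x i \<in> B" using \<open>i \<in> K'\<close> Suc.prems(5) K'_def by auto
      ultimately show "z \<in> B1" using xne(1)[OF \<open>i \<in> K'\<close>] unfolding B1_def by simp
    qed
    show "y ` K' \<inter> B1 = {}"
    proof (rule equals0I)
      fix z assume "z \<in> y ` K' \<inter> B1"
      then obtain i where "i \<in> K'" "z = y i" "z \<in> B1" by blast
      moreover have "y i \<notin> B" using \<open>i \<in> K'\<close> Suc.prems(6) K'_def by auto
      ultimately show False using xne(2)[OF \<open>i \<in> K'\<close>] unfolding B1_def by simp
    qed
    show "\<forall>i\<in>K'. insert (y i) (B1 - {x i}) \<in> F"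
    proof
      fix i assume i: "i \<in> K'"
      then have "insert (y i) (B - {x i}) \<in> F" using Suc.prems(7) K'_def by auto
      then show "insert (y i) (B1 - {x i}) \<in> F" using eq[OF i i] by simp
    qed
    show "\<forall>i\<in>K'. \<forall>j\<in>K'. i \<noteq> j \<and> insert (y j) (B1 - {x i}) \<in> F \<longrightarrow> \<Phi> j < \<Phi> i"
    proof (intro ballI impI)
      fix i j assume i: "i \<in> K'" and j: "j \<in> K'" and h: "i \<noteq> j \<and> insert (y j) (B1 - {x i}) \<in> F"
      then have "insert (y j) (B - {x i}) \<in> F" using eq[OF i j] by simp
      moreover have "i \<in> K" "j \<in> K" using i j K'_def by auto
      ultimately show "\<Phi> j < \<Phi> i" using Suc.prems(8) h by blast
    qed
  qed
  moreover have "(B1 - x ` K') \<union> y ` K' = (B - x ` K) \<union> y ` K"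
  proof -
    have K: "K = insert s K'" using s(1) K'_def by auto
    have "y s \<notin> x ` K'" using ysB Suc.prems(5) K by blast
    moreover have "x s \<notin> x ` K'"
    proof
      assume "x s \<in> x ` K'"
      then obtain i where i: "i \<in> K'" "x s = x i" by blast
      then have "i \<in> K" "i \<noteq> s" using K'_def by auto
      then show False using i(2) s(1) Suc.prems(3) inj_on_eq_iff by metis
    qed
    ultimately show ?thesis unfolding B1_def K image_insert by auto
  qed
  ultimately show ?case by metis
qed

end

lemma arc_len_A1: "(u,v) \<in> exch_A1 X I1 B \<Longrightarrow> arc_len X I1 I2 B w u v = w u"
  unfolding arc_len_def by simp
lemma arc_len_A2: "(u,v) \<in> exch_A2 X I2 B \<Longrightarrow> arc_len X I1 I2 B w u v = - w u"
  unfolding arc_len_def exch_A1_def exch_A2_def by auto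

lemma dir2:
  assumes m1: "matroid X I1" and m2: "matroid X I2" and cb: "common_basis I1 I2 B"
    and arc: "\<forall>(x, y) \<in> exch_A1 X I1 B \<union> exch_A2 X I2 B. d x y \<le> arc_len X I1 I2 B w x y"
    and tri: "\<forall>x\<in>X. \<forall>(y, z) \<in> exch_A1 X I1 B \<union> exch_A2 X I2 B. d x z \<le> d x y + arc_len X I1 I2 B w y z"
    and dia: "\<forall>x\<in>X. d x x \<ge> \<delta>"
  shows "delta_optimal I1 I2 w \<delta> B"
  unfolding delta_optimal_def
proof (intro allI impI, elim conjE)
  fix B' assume cb': "common_basis I1 I2 B'" and ne: "B' \<noteq> B"
  interpret M1: matr X I1 by (unfold_locales, fact m1)
  interpret M2: matr X I2 by (unfold_locales, fact m2)
  have B1: "B \<in> I1" "B \<in> I2" "B' \<in> I1" "B' \<in> I2" using cb cb' unfolding common_basis_def basis_def by auto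
  have BX: "B \<subseteq> X" "B' \<subseteq> X" using B1 M1.sub by auto
  have fB: "finite B" "finite B'" using B1 M1.finI by auto
  have cc: "card B = card B'" using cb cb' M1.basis_card unfolding common_basis_def by blast
  obtain f1 where f1: "bij_betw f1 (B' - B) (B - B')" "\<forall>y\<in>B' - B. insert y (B - {f1 y}) \<in> I1"
    using M1.matching[OF B1(1) B1(3) cc] by blast
  obtain f2 where f2: "bij_betw f2 (B' - B) (B - B')" "\<forall>y\<in>B' - B. insert y (B - {f2 y}) \<in> I2"
    using M2.matching[OF B1(2) B1(4) cc] by blast
  define S where "S = B - B'"
  define S' where "S' = B' - B"
  have "S \<noteq> {}"
  proof
    assume "S = {}" then have "B \<subseteq> B'" unfolding S_def by auto
    then show False using ne cc fB card_subset_eq by metis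
  qed
  then obtain x0 where x0: "x0 \<in> S" by blast
  have x0X: "x0 \<in> X" using x0 BX S_def by auto
  define q where "q v = (if v = x0 then 0 else d x0 v)" for v
  define q' where "q' v = (if v = x0 then d x0 x0 else d x0 v)" for v
  have key: "q' (f2 y) \<le> q (f1 y) + w (f1 y) - w y" if y: "y \<in> S'" for y
  proof -
    have f1y: "f1 y \<in> S" "f2 y \<in> S" using f1(1) f2(1) y unfolding S_def S'_def bij_betw_def by auto
    have a1: "(f1 y, y) \<in> exch_A1 X I1 B" using f1(2) y f1y BX unfolding exch_A1_def S_def S'_def by auto
    have a2: "(y, f2 y) \<in> exch_A2 X I2 B" using f2(2) y f1y BX unfolding exch_A2_def S_def S'_def by auto
    have l1: "arc_len X I1 I2 B w (f1 y) y = w (f1 y)" using arc_len_A1[OF a1] .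
    have l2: "arc_len X I1 I2 B w y (f2 y) = - w y" using arc_len_A2[OF a2] .
    have s1: "d x0 y \<le> q (f1 y) + w (f1 y)"
    proof (cases "f1 y = x0")
      case True
      have "d (f1 y) y \<le> arc_len X I1 I2 B w (f1 y) y" using arc a1 by blast
      then show ?thesis using True l1 unfolding q_def by auto
    next
      case False
      have "d x0 y \<le> d x0 (f1 y) + arc_len X I1 I2 B w (f1 y) y" using tri x0X a1 by blast
      then show ?thesis using False l1 unfolding q_def by auto
    qed
    have "d x0 (f2 y) \<le> d x0 y + arc_len X I1 I2 B w y (f2 y)" using tri x0X a2 by blast
    then have s2: "d x0 (f2 y) \<le> d x0 y - w y" using l2 by simp
    show ?thesis using s1 s2 unfolding q'_def by (auto split: if_splits)
  qed
  have fS: "finite S" "finite S'" using fB S_def S'_def by auto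
  have "sum q' S = sum (q' \<circ> f2) S'" using sum.reindex_bij_betw[OF f2(1), of q'] S_def S'_def by simp
  also have "\<dots> \<le> sum (\<lambda>y. q (f1 y) + w (f1 y) - w y) S'"
    using key by (intro sum_mono) auto
  also have "\<dots> = sum q S + sum w S - sum w S'"
    using sum.reindex_bij_betw[OF f1(1), of q] sum.reindex_bij_betw[OF f1(1), of w] S_def S'_def
    by (simp add: sum.distrib sum_subtractf)
  finally have A: "sum q' S \<le> sum q S + sum w S - sum w S'" .
  have "sum q' S = sum q S + d x0 x0"
  proof -
    have "sum q' S = sum (\<lambda>v. q v + (if v = x0 then d x0 x0 else 0)) S"
      unfolding q_def q'_def by (intro sum.cong) auto
    also have "\<dots> = sum q S + d x0 x0" using x0 fS by (simp add: sum.distrib)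
    finally show ?thesis .
  qed
  with A have "d x0 x0 \<le> sum w S - sum w S'" by simp
  moreover have "sum w B = sum w (B \<inter> B') + sum w S" "sum w B' = sum w (B \<inter> B') + sum w S'"
    using fB unfolding S_def S'_def
    by (simp_all add: sum.Int_Diff[of B w B'] sum.Int_Diff[of B' w B] Int_commute)
  moreover have "d x0 x0 \<ge> \<delta>" using dia x0X by auto
  ultimately show "sum w B' + \<delta> \<le> sum w B" by linarith
qed

definition valid :: "('a\<Rightarrow>'a\<Rightarrow>bool) \<Rightarrow> ('a\<Rightarrow>'a\<Rightarrow>bool) \<Rightarrow> nat \<Rightarrow> (nat\<Rightarrow>'a) \<Rightarrow> (nat\<Rightarrow>'a) \<Rightarrow> bool" where
  "valid R1 R2 k xs ys \<longleftrightarrow> 0 < k \<and> (\<forall>i<k. R1 (xs i) (ys i) \<and> R2 (ys i) (xs (Suc i mod k)))"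

definition clen :: "('a \<Rightarrow> real) \<Rightarrow> nat \<Rightarrow> (nat\<Rightarrow>'a) \<Rightarrow> (nat\<Rightarrow>'a) \<Rightarrow> real" where
  "clen c k xs ys = (\<Sum>i<k. c (xs i) + c (ys i))"

lemma chord_fwd:
  assumes v: "valid R1 R2 k xs ys" and ij: "i < j" "j < k" and ch: "R1 (xs i) (ys j)"
  defines "d \<equiv> j - i"
  defines "xs' \<equiv> \<lambda>t. if t \<le> i then xs t else xs (t + d)"
  defines "ys' \<equiv> \<lambda>t. if t < i then ys t else ys (t + d)"
  shows "valid R1 R2 (k - d) xs' ys' \<and>
    clen c (k - d) xs' ys' = clen c i xs ys + c (xs i) + c (ys j) + (clen c k xs ys - clen c (Suc j) xs ys)"
proof
  have vv: "\<And>t. t < k \<Longrightarrow> R1 (xs t) (ys t) \<and> R2 (ys t) (xs (Suc t mod k))" and k0: "0 < k"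
    using v unfolding valid_def by auto
  show "valid R1 R2 (k - d) xs' ys'"
    unfolding valid_def
  proof (intro conjI allI impI)
    show "0 < k - d" using ij d_def by simp
    fix t assume t: "t < k - d"
    show "R1 (xs' t) (ys' t)"
    proof (cases "t < i")
      case True then show ?thesis using vv[of t] ij unfolding xs'_def ys'_def by auto
    next
      case False
      show ?thesis
      proof (cases "t = i")
        case True then show ?thesis using ch ij unfolding xs'_def ys'_def d_def by auto
      next
        case False
        then have "t > i" using \<open>\<not> t < i\<close> by simp
        then show ?thesis using vv[of "t + d"] t unfolding xs'_def ys'_def by auto
      qed
    qed
    show "R2 (ys' t) (xs' (Suc t mod (k - d)))"
    proof (cases "Suc t < k - d")
      case True
      then have m: "Suc t mod (k - d) = Suc t" by simp
      show ?thesis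
      proof (cases "t < i")
        case True
        then have "Suc t mod k = Suc t" using ij by simp
        then show ?thesis using vv[of t] True ij unfolding xs'_def ys'_def m by auto
      next
        case False
        have "Suc (t + d) < k" using \<open>Suc t < k - d\<close> by simp
        then have "Suc (t + d) mod k = Suc t + d" by simp
        then show ?thesis using vv[of "t + d"] False \<open>Suc (t+d) < k\<close> unfolding xs'_def ys'_def m by auto
      qed
    next
      case False
      then have st: "Suc t = k - d" using t by simp
      then have m: "Suc t mod (k - d) = 0" by simp
      have "t + d = k - 1" using st ij d_def by simp
      moreover have "\<not> t < i" using st ij d_def by simp
      moreover have "Suc (k - 1) mod k = 0" using k0 by simp
      ultimately show ?thesis using vv[of "k - 1"] k0 unfolding xs'_def ys'_def m by auto
    qed
  qed
  define f where "f t = c (xs t) + c (ys t)" for t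
  define f' where "f' t = c (xs' t) + c (ys' t)" for t
  have kd: "k - d = Suc i + (k - Suc j)" using ij d_def by simp
  have "clen c (k - d) xs' ys' = (\<Sum>t<Suc i. f' t) + (\<Sum>s<k - Suc j. f' (Suc i + s))"
    unfolding clen_def f'_def[symmetric] kd sum_split_add ..
  also have "(\<Sum>t<Suc i. f' t) = (\<Sum>t<i. f t) + c (xs i) + c (ys j)"
  proof -
    have "(\<Sum>t<i. f' t) = (\<Sum>t<i. f t)" unfolding f'_def f_def xs'_def ys'_def by (intro sum.cong) auto
    moreover have "f' i = c (xs i) + c (ys j)" unfolding f'_def xs'_def ys'_def d_def using ij by simp
    ultimately show ?thesis by simp
  qed
  also have "(\<Sum>s<k - Suc j. f' (Suc i + s)) = (\<Sum>s<k - Suc j. f (Suc j + s))"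
    unfolding f'_def f_def xs'_def ys'_def d_def using ij by (intro sum.cong) (auto simp: add.commute)
  also have "(\<Sum>s<k - Suc j. f (Suc j + s)) = clen c k xs ys - clen c (Suc j) xs ys"
  proof -
    have "k = Suc j + (k - Suc j)" using ij by simp
    then have "clen c k xs ys = clen c (Suc j) xs ys + (\<Sum>s<k - Suc j. f (Suc j + s))"
      unfolding clen_def f_def[symmetric] by (metis sum_split_add)
    then show ?thesis by simp
  qed
  finally show "clen c (k - d) xs' ys' = clen c i xs ys + c (xs i) + c (ys j) + (clen c k xs ys - clen c (Suc j) xs ys)"
    unfolding clen_def f_def by simp
qed

lemma chord_bwd:
  assumes v: "valid R1 R2 k xs ys" and ij: "j < i" "i < k" and ch: "R1 (xs i) (ys j)"
  defines "m \<equiv> i - j"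
  defines "xs' \<equiv> \<lambda>t. xs (Suc j + t)"
  defines "ys' \<equiv> \<lambda>t. if Suc t = m then ys j else ys (Suc j + t)"
  shows "valid R1 R2 m xs' ys' \<and>
    clen c m xs' ys' = clen c (Suc i) xs ys - clen c (Suc j) xs ys - c (ys i) + c (ys j)"
proof
  have vv: "\<And>t. t < k \<Longrightarrow> R1 (xs t) (ys t) \<and> R2 (ys t) (xs (Suc t mod k))" and k0: "0 < k"
    using v unfolding valid_def by auto
  show "valid R1 R2 m xs' ys'"
    unfolding valid_def
  proof (intro conjI allI impI)
    show "0 < m" using ij m_def by simp
    fix t assume t: "t < m"
    show "R1 (xs' t) (ys' t)"
    proof (cases "Suc t = m")
      case True
      then have "Suc j + t = i" using ij m_def by simp
      then show ?thesis using ch True unfolding xs'_def ys'_def by simp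
    next
      case False
      then show ?thesis using vv[of "Suc j + t"] t ij m_def unfolding xs'_def ys'_def by auto
    qed
    show "R2 (ys' t) (xs' (Suc t mod m))"
    proof (cases "Suc t = m")
      case True
      have "Suc j mod k = Suc j" using ij by simp
      then show ?thesis using vv[of j] True ij unfolding xs'_def ys'_def by simp
    next
      case False
      then have a: "Suc t mod m = Suc t" using t by simp
      have "Suc (Suc j + t) < k" using t False ij m_def by simp
      then have "Suc (Suc j + t) mod k = Suc j + Suc t" by simp
      then show ?thesis using vv[of "Suc j + t"] False \<open>Suc (Suc j + t) < k\<close> unfolding xs'_def ys'_def a by auto
    qed
  qed
  define f where "f t = c (xs t) + c (ys t)" for t
  obtain m0 where m0: "m = Suc m0" using ij m_def by (metis Suc_diff_Suc)
  have im: "Suc j + m0 = i" using m0 ij m_def by simp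
  have "clen c m xs' ys' = (\<Sum>t<m0. f (Suc j + t)) + (c (xs i) + c (ys j))"
    unfolding clen_def m0 using im unfolding f_def xs'_def ys'_def m0 by (simp add: sum.lessThan_Suc)
  moreover have "clen c (Suc i) xs ys = clen c (Suc j) xs ys + (\<Sum>t<m0. f (Suc j + t)) + f i"
  proof -
    have "Suc i = Suc j + Suc m0" using im by simp
    then have "clen c (Suc i) xs ys = clen c (Suc j) xs ys + (\<Sum>t<Suc m0. f (Suc j + t))"
      unfolding clen_def f_def[symmetric] by (metis sum_split_add)
    then show ?thesis using im by simp
  qed
  ultimately show "clen c m xs' ys' = clen c (Suc i) xs ys - clen c (Suc j) xs ys - c (ys i) + c (ys j)"
    unfolding f_def by simp
qed


lemma bij_modrev: "0 < k \<Longrightarrow> bij_betw (\<lambda>i. (k - i) mod k) {..<k} {..<(k::nat)}"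
proof -
  assume k: "0 < k"
  have inj: "inj_on (\<lambda>i. (k - i) mod k) {..<k}"
  proof (rule inj_onI)
    fix a b assume a: "a \<in> {..<k}" and b: "b \<in> {..<k}" and e: "(k - a) mod k = (k - b) mod k"
    have h: "(k - x) mod k = (if x = 0 then 0 else k - x)" if "x < k" for x
      using that k by (cases "x = 0") auto
    show "a = b" using e h[of a] h[of b] a b by (auto split: if_splits)
  qed
  moreover have "(\<lambda>i. (k - i) mod k) ` {..<k} \<subseteq> {..<k}" using k by auto
  ultimately show ?thesis unfolding bij_betw_def using endo_inj_surj[of "{..<k}"] by auto
qed

lemma bij_natrev: "bij_betw (\<lambda>i. k - Suc i) {..<k} {..<(k::nat)}"
proof -
  have inj: "inj_on (\<lambda>i. k - Suc i) {..<k}" by (rule inj_onI) auto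
  moreover have "(\<lambda>i. k - Suc i) ` {..<k} \<subseteq> {..<k}" by auto
  ultimately show ?thesis unfolding bij_betw_def using endo_inj_surj[of "{..<k}"] by auto
qed

lemma reversal:
  assumes v: "valid R1 R2 k xs ys"
  defines "rxs \<equiv> \<lambda>i. xs ((k - i) mod k)"
  defines "rys \<equiv> \<lambda>i. ys (k - Suc i)"
  shows "valid (\<lambda>a b. R2 b a) (\<lambda>a b. R1 b a) k rxs rys \<and> clen c k rxs rys = clen c k xs ys
    \<and> rxs ` {..<k} = xs ` {..<k} \<and> rys ` {..<k} = ys ` {..<k}"
proof (intro conjI)
  have vv: "\<And>t. t < k \<Longrightarrow> R1 (xs t) (ys t) \<and> R2 (ys t) (xs (Suc t mod k))" and k0: "0 < k"
    using v unfolding valid_def by auto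
  show "valid (\<lambda>a b. R2 b a) (\<lambda>a b. R1 b a) k rxs rys"
    unfolding valid_def
  proof (intro conjI allI impI)
    show "0 < k" by fact
    fix i assume i: "i < k"
    have "Suc (k - Suc i) = k - i" using i by simp
    then show "R2 (rys i) (rxs i)" using vv[of "k - Suc i"] i unfolding rxs_def rys_def by simp
    show "R1 (rxs (Suc i mod k)) (rys i)"
    proof (cases "Suc i < k")
      case True
      then have "(k - Suc i) mod k = k - Suc i" using k0 by simp
      then show ?thesis using vv[of "k - Suc i"] True unfolding rxs_def rys_def by simp
    next
      case False
      then have "Suc i = k" using i by simp
      then show ?thesis using vv[of 0] k0 unfolding rxs_def rys_def by simp
    qed
  qed
  have b1: "bij_betw (\<lambda>i. (k - i) mod k) {..<k} {..<k}" using bij_modrev k0 by blast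
  have b2: "bij_betw (\<lambda>i. k - Suc i) {..<k} {..<k}" using bij_natrev by blast
  have "(\<Sum>i<k. c (rxs i)) = (\<Sum>i<k. c (xs i))"
    using sum.reindex_bij_betw[OF b1, of "\<lambda>i. c (xs i)"] unfolding rxs_def by simp
  moreover have "(\<Sum>i<k. c (rys i)) = (\<Sum>i<k. c (ys i))"
    using sum.reindex_bij_betw[OF b2, of "\<lambda>i. c (ys i)"] unfolding rys_def by simp
  ultimately show "clen c k rxs rys = clen c k xs ys" unfolding clen_def by (simp add: sum.distrib)
  show "rxs ` {..<k} = xs ` {..<k}"
    using bij_betw_imp_surj_on[OF b1] unfolding rxs_def by (metis image_image)
  show "rys ` {..<k} = ys ` {..<k}"
    using bij_betw_imp_surj_on[OF b2] unfolding rys_def by (metis image_image)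
qed

context matr begin

lemma core:
  assumes BF: "B \<in> F"
    and R1def: "\<forall>x y. R1 x y \<longleftrightarrow> x \<in> B \<and> y \<in> X - B \<and> insert y (B - {x}) \<in> F"
    and v: "valid R1 R2 k xs ys" and short: "clen c k xs ys < \<delta>" and d0: "\<delta> \<ge> 0"
    and MIN: "\<forall>k' xs' ys'. valid R1 R2 k' xs' ys' \<and> k' < k \<longrightarrow> \<delta> \<le> clen c k' xs' ys'"
  shows "inj_on xs {..<k} \<and> inj_on ys {..<k} \<and> (B - xs ` {..<k}) \<union> ys ` {..<k} \<in> F"
proof -
  have vv: "\<And>t. t < k \<Longrightarrow> R1 (xs t) (ys t) \<and> R2 (ys t) (xs (Suc t mod k))" and k0: "0 < k"
    using v unfolding valid_def by auto
  define L where "L = clen c k xs ys"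
  define S where "S m = clen c m xs ys" for m
  define e where "e = (\<delta> - L) / (2 * real k)"
  have e0: "e > 0" unfolding e_def L_def using short k0 by simp
  have ek: "2 * real k * e = \<delta> - L" unfolding e_def using k0 by simp
  define \<Phi> where "\<Phi> i = S i + c (xs i) + (2 * real i + 1) * e" for i
  have SSuc: "S (Suc m) = S m + c (xs m) + c (ys m)" for m unfolding S_def clen_def by simp
  have chord: "\<Phi> j < \<Phi> i" if ij: "i < k" "j < k" "i \<noteq> j" and ch: "R1 (xs i) (ys j)" for i j
  proof (cases "i < j")
    case True
    define d where "d = j - i"
    obtain xs' ys' where "valid R1 R2 (k - d) xs' ys'"
      "clen c (k - d) xs' ys' = S i + c (xs i) + c (ys j) + (L - S (Suc j))"
      using chord_fwd[OF v True ij(2) ch, of c] unfolding d_def S_def L_def by blast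
    moreover have "k - d < k" using True d_def k0 by simp
    ultimately have "\<delta> \<le> S i + c (xs i) + c (ys j) + (L - S (Suc j))" using MIN by fastforce
    then have A: "\<delta> \<le> S i + c (xs i) + L - S j - c (xs j)" using SSuc[of j] by simp
    have "(2 * real j + 1) * e - (2 * real i + 1) * e = 2 * (real j - real i) * e" by (simp add: algebra_simps)
    moreover have "2 * (real j - real i) * e < 2 * real k * e"
      using e0 ij by (intro mult_strict_right_mono) auto
    ultimately show ?thesis using A ek unfolding \<Phi>_def by linarith
  next
    case False
    then have ji: "j < i" using ij by simp
    obtain xs' ys' where "valid R1 R2 (i - j) xs' ys'"
      "clen c (i - j) xs' ys' = S (Suc i) - S (Suc j) - c (ys i) + c (ys j)"
      using chord_bwd[OF v ji ij(1) ch, of c] unfolding S_def by blast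
    moreover have "i - j < k" using ij by simp
    ultimately have "\<delta> \<le> S (Suc i) - S (Suc j) - c (ys i) + c (ys j)" using MIN by fastforce
    then have A: "\<delta> \<le> S i + c (xs i) - S j - c (xs j)" using SSuc[of i] SSuc[of j] by simp
    have "(2 * real i + 1) * e - (2 * real j + 1) * e = 2 * (real i - real j) * e" by (simp add: algebra_simps)
    moreover have "0 < 2 * (real i - real j) * e" using e0 ji by simp
    ultimately show ?thesis using A d0 unfolding \<Phi>_def by linarith
  qed
  have xB: "xs i \<in> B" "ys i \<in> X - B" "insert (ys i) (B - {xs i}) \<in> F" if "i < k" for i
    using vv[OF that] R1def by auto
  have injx: "inj_on xs {..<k}"
  proof (rule inj_onI, rule ccontr)
    fix a b assume a: "a \<in> {..<k}" and b: "b \<in> {..<k}" and eq: "xs a = xs b" and ne: "a \<noteq> b"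
    have "R1 (xs a) (ys b)" "R1 (xs b) (ys a)" using vv a b eq by (metis lessThan_iff)+
    then show False using chord[of a b] chord[of b a] a b ne by fastforce
  qed
  have injy: "inj_on ys {..<k}"
  proof (rule inj_onI, rule ccontr)
    fix a b assume a: "a \<in> {..<k}" and b: "b \<in> {..<k}" and eq: "ys a = ys b" and ne: "a \<noteq> b"
    have "R1 (xs a) (ys b)" "R1 (xs b) (ys a)" using vv a b eq by (metis lessThan_iff)+
    then show False using chord[of a b] chord[of b a] a b ne by fastforce
  qed
  have "(B - xs ` {..<k}) \<union> ys ` {..<k} \<in> F"
  proof (rule triangular[where \<Phi> = \<Phi>])
    show "B \<in> F" "finite {..<k}" "inj_on xs {..<k}" "inj_on ys {..<k}" by (fact BF, simp, fact injx, fact injy)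
    show "xs ` {..<k} \<subseteq> B" using xB by auto
    show "ys ` {..<k} \<inter> B = {}" using xB by auto
    show "\<forall>i\<in>{..<k}. insert (ys i) (B - {xs i}) \<in> F" using xB by auto
    show "\<forall>i\<in>{..<k}. \<forall>j\<in>{..<k}. i \<noteq> j \<and> insert (ys j) (B - {xs i}) \<in> F \<longrightarrow> \<Phi> j < \<Phi> i"
    proof (intro ballI impI)
      fix i j assume i: "i \<in> {..<k}" and j: "j \<in> {..<k}" and h: "i \<noteq> j \<and> insert (ys j) (B - {xs i}) \<in> F"
      have "R1 (xs i) (ys j)" using R1def xB[of i] xB[of j] i j h by auto
      then show "\<Phi> j < \<Phi> i" using chord i j h by auto
    qed
  qed
  then show ?thesis using injx injy by blast
qed

end

definition cst :: "'a set \<Rightarrow> ('a \<Rightarrow> real) \<Rightarrow> 'a \<Rightarrow> real" where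
  "cst B w v = (if v \<in> B then w v else - w v)"

lemma cycles_ge:
  assumes m1: "matroid X I1" and m2: "matroid X I2" and cb: "common_basis I1 I2 B"
    and d0: "\<delta> \<ge> 0" and opt: "delta_optimal I1 I2 w \<delta> B"
  shows "\<forall>k xs ys. valid (\<lambda>x y. (x,y) \<in> exch_A1 X I1 B) (\<lambda>y x. (y,x) \<in> exch_A2 X I2 B) k xs ys
      \<longrightarrow> \<delta> \<le> clen (cst B w) k xs ys"
proof (rule ccontr)
  interpret M1: matr X I1 by (unfold_locales, fact m1)
  interpret M2: matr X I2 by (unfold_locales, fact m2)
  define R1 where "R1 = (\<lambda>x y. (x,y) \<in> exch_A1 X I1 B)"
  define R2 where "R2 = (\<lambda>y x. (y,x) \<in> exch_A2 X I2 B)"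
  define c where "c = cst B w"
  assume "\<not> ?thesis"
  then have "\<exists>k. \<exists>xs ys. valid R1 R2 k xs ys \<and> clen c k xs ys < \<delta>"
    unfolding R1_def R2_def c_def by (auto simp: not_le)
  then obtain k where kex: "\<exists>xs ys. valid R1 R2 k xs ys \<and> clen c k xs ys < \<delta>"
    and kmin: "\<forall>m<k. \<not> (\<exists>xs ys. valid R1 R2 m xs ys \<and> clen c m xs ys < \<delta>)"
    using exists_least_iff[of "\<lambda>k. \<exists>xs ys. valid R1 R2 k xs ys \<and> clen c k xs ys < \<delta>"] by blast
  then obtain xs ys where v: "valid R1 R2 k xs ys" and sh: "clen c k xs ys < \<delta>" by blast
  have MIN: "\<forall>k' xs' ys'. valid R1 R2 k' xs' ys' \<and> k' < k \<longrightarrow> \<delta> \<le> clen c k' xs' ys'"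
    using kmin by (auto simp: not_less)
  have BI: "B \<in> I1" "B \<in> I2" using cb unfolding common_basis_def basis_def by auto
  have R1d: "\<forall>x y. R1 x y \<longleftrightarrow> x \<in> B \<and> y \<in> X - B \<and> insert y (B - {x}) \<in> I1"
    unfolding R1_def exch_A1_def by auto
  from M1.core[OF BI(1) R1d v sh d0 MIN]
  have injx: "inj_on xs {..<k}" and injy: "inj_on ys {..<k}"
    and B'1: "(B - xs ` {..<k}) \<union> ys ` {..<k} \<in> I1" by auto
  define rxs where "rxs = (\<lambda>i. xs ((k - i) mod k))"
  define rys where "rys = (\<lambda>i. ys (k - Suc i))"
  have rv: "valid (\<lambda>a b. R2 b a) (\<lambda>a b. R1 b a) k rxs rys" "clen c k rxs rys = clen c k xs ys"
    "rxs ` {..<k} = xs ` {..<k}" "rys ` {..<k} = ys ` {..<k}"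
    using reversal[OF v, of c] unfolding rxs_def rys_def by auto
  have R1d': "\<forall>x y. (\<lambda>a b. R2 b a) x y \<longleftrightarrow> x \<in> B \<and> y \<in> X - B \<and> insert y (B - {x}) \<in> I2"
    unfolding R2_def exch_A2_def by auto
  have MIN': "\<forall>k' xs' ys'. valid (\<lambda>a b. R2 b a) (\<lambda>a b. R1 b a) k' xs' ys' \<and> k' < k \<longrightarrow> \<delta> \<le> clen c k' xs' ys'"
  proof (intro allI impI, elim conjE)
    fix k' xs' ys' assume v': "valid (\<lambda>a b. R2 b a) (\<lambda>a b. R1 b a) k' xs' ys'" and kk: "k' < k"
    from reversal[OF v', of c]
    obtain a b where "valid R1 R2 k' a b" "clen c k' a b = clen c k' xs' ys'" by auto
    then show "\<delta> \<le> clen c k' xs' ys'" using MIN kk by metis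
  qed
  from M2.core[OF BI(2) R1d' rv(1) _ d0 MIN'] sh rv(2-4)
  have B'2: "(B - xs ` {..<k}) \<union> ys ` {..<k} \<in> I2" by auto
  define B' where "B' = (B - xs ` {..<k}) \<union> ys ` {..<k}"
  have vv: "\<And>t. t < k \<Longrightarrow> R1 (xs t) (ys t)" and k0: "0 < k" using v unfolding valid_def by auto
  have xB: "xs i \<in> B" "ys i \<in> X - B" if "i < k" for i using vv[OF that] unfolding R1_def exch_A1_def by auto
  have fB: "finite B" using M1.finI BI by auto
  have xsub: "xs ` {..<k} \<subseteq> B" using xB by auto
  have ydis: "ys ` {..<k} \<inter> B = {}" using xB by auto
  have cx: "card (xs ` {..<k}) = k" "card (ys ` {..<k}) = k" using injx injy by (simp_all add: card_image)
  have fy: "finite (ys ` {..<k})" by simp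
  have "card B' = card (B - xs ` {..<k}) + card (ys ` {..<k})"
    unfolding B'_def using fB ydis by (intro card_Un_disjoint) auto
  also have "card (B - xs ` {..<k}) = card B - k" using card_Diff_subset[OF _ xsub] cx fB finite_subset[OF xsub] by simp
  also have "k \<le> card B" using card_mono[OF fB xsub] cx by simp
  ultimately have cB': "card B' = card B" using cx by simp
  have cbB': "common_basis I1 I2 B'" unfolding common_basis_def
    using M1.basis_of_card[OF _ B'1[folded B'_def] cB'] M2.basis_of_card[OF _ B'2[folded B'_def] cB'] cb
    unfolding common_basis_def by blast
  have "ys 0 \<in> B'" using k0 unfolding B'_def by auto
  then have ne: "B' \<noteq> B" using xB[OF k0] by auto
  have "sum w B' = sum w (B - xs ` {..<k}) + sum w (ys ` {..<k})"
    unfolding B'_def using fB ydis by (intro sum.union_disjoint) auto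
  also have "sum w (B - xs ` {..<k}) = sum w B - sum w (xs ` {..<k})"
    using sum_diff[OF fB xsub] .
  also have "sum w (xs ` {..<k}) = (\<Sum>i<k. w (xs i))" using sum.reindex[OF injx] by simp
  also have "sum w (ys ` {..<k}) = (\<Sum>i<k. w (ys i))" using sum.reindex[OF injy] by simp
  finally have "sum w B' = sum w B - (\<Sum>i<k. w (xs i)) + (\<Sum>i<k. w (ys i))" .
  moreover have "clen c k xs ys = (\<Sum>i<k. w (xs i)) - (\<Sum>i<k. w (ys i))"
    unfolding clen_def c_def cst_def using xB by (simp add: sum_subtractf[symmetric])
  moreover have "sum w B \<ge> sum w B' + \<delta>" using opt cbB' ne unfolding delta_optimal_def by blast
  ultimately show False using sh by linarith
qed

definition wf :: "('a \<times> 'a) set \<Rightarrow> nat \<Rightarrow> (nat \<Rightarrow> 'a) \<Rightarrow> bool" where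
  "wf E n v \<longleftrightarrow> (\<forall>t<n. (v t, v (Suc t)) \<in> E)"

definition wl :: "('a \<Rightarrow> real) \<Rightarrow> nat \<Rightarrow> (nat \<Rightarrow> 'a) \<Rightarrow> real" where
  "wl c n v = (\<Sum>t<n. c (v t))"

locale wk =
  fixes E :: "('a \<times> 'a) set" and X :: "'a set" and c :: "'a \<Rightarrow> real" and \<delta> :: real
  assumes inX: "(u,v) \<in> E \<Longrightarrow> u \<in> X \<and> v \<in> X"
    and finX: "finite X" and d0: "\<delta> \<ge> 0"
    and closed: "\<And>n v. wf E n v \<Longrightarrow> 0 < n \<Longrightarrow> v n = v 0 \<Longrightarrow> \<delta> \<le> wl c n v"
begin

abbreviation "N \<equiv> card X"

lemma wf_X: "wf E n v \<Longrightarrow> 0 < n \<Longrightarrow> t \<le> n \<Longrightarrow> v t \<in> X"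
  unfolding wf_def
  by (metis inX Suc_le_eq le_neq_implies_less lessI less_le_trans diff_Suc_1 gr0_implies_Suc le_SucE)

lemma short1:
  assumes w: "wf E n v" and nN: "N < n"
  shows "\<exists>n' v'. wf E n' v' \<and> 0 < n' \<and> n' < n \<and> v' 0 = v 0 \<and> v' n' = v n \<and> wl c n' v' \<le> wl c n v"
proof -
  have n0: "0 < n" using nN by simp
  have vX: "v ` {..N} \<subseteq> X" using wf_X[OF w n0] nN by auto
  have "\<not> inj_on v {..N}"
  proof
    assume "inj_on v {..N}"
    then have "card (v ` {..N}) = Suc N" by (simp add: card_image)
    moreover have "card (v ` {..N}) \<le> N" using card_mono[OF finX vX] .
    ultimately show False by simp
  qed
  then obtain a b where ab: "a \<le> N" "b \<le> N" "a < b" "v a = v b"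
    unfolding inj_on_def by (metis atMost_iff linorder_neqE_nat)
  define d where "d = b - a"
  define v' where "v' t = (if t \<le> a then v t else v (t + d))" for t
  define n' where "n' = n - d"
  have bn: "b < n" using ab nN by simp
  have d0': "0 < d" using ab d_def by simp
  have w': "wf E n' v'"
    unfolding wf_def
  proof (intro allI impI)
    fix t assume t: "t < n'"
    have tn: "t + d < n" using t n'_def d_def bn by simp
    show "(v' t, v' (Suc t)) \<in> E"
    proof (cases "Suc t \<le> a")
      case True then show ?thesis using w tn unfolding wf_def v'_def by auto
    next
      case False
      show ?thesis
      proof (cases "t = a")
        case True
        then have "v' t = v b" "v' (Suc t) = v (Suc b)" unfolding v'_def d_def using ab by auto
        then show ?thesis using w bn unfolding wf_def by auto
      next
        case False
        then have "v' t = v (t + d)" "v' (Suc t) = v (Suc (t + d))" unfolding v'_def using \<open>\<not> Suc t \<le> a\<close> by auto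
        then show ?thesis using w tn unfolding wf_def by auto
      qed
    qed
  qed
  have cl: "wf E d (\<lambda>t. v (a + t))" using w bn d_def unfolding wf_def by auto
  have "\<delta> \<le> wl c d (\<lambda>t. v (a + t))" using closed[OF cl d0'] ab d_def by simp
  then have C: "0 \<le> wl c d (\<lambda>t. v (a + t))" using d0 by simp
  have n_split: "n = a + d + (n - b)" using bn ab d_def by simp
  have "wl c n v = (\<Sum>t<a. c (v t)) + wl c d (\<lambda>t. v (a + t)) + (\<Sum>t<n - b. c (v (a + d + t)))"
    unfolding wl_def by (subst n_split) (simp only: sum_split_add)
  moreover have n'_split: "n' = a + (n - b)" using n'_def n_split by simp
  have "wl c n' v' = (\<Sum>t<a. c (v t)) + (\<Sum>t<n - b. c (v (a + d + t)))"
  proof -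
    have "wl c n' v' = (\<Sum>t<a. c (v' t)) + (\<Sum>t<n - b. c (v' (a + t)))"
      unfolding wl_def by (subst n'_split) (simp only: sum_split_add)
    moreover have "(\<Sum>t<a. c (v' t)) = (\<Sum>t<a. c (v t))" unfolding v'_def by (intro sum.cong) auto
    moreover have "(\<Sum>t<n - b. c (v' (a + t))) = (\<Sum>t<n - b. c (v (a + d + t)))"
      unfolding v'_def using ab d_def by (intro sum.cong) (auto simp: add.assoc add.commute)
    ultimately show ?thesis by simp
  qed
  ultimately have "wl c n' v' \<le> wl c n v" using C by simp
  moreover have "0 < n'" "n' < n" using n'_def d_def bn d0' by auto
  moreover have "v' 0 = v 0" unfolding v'_def by simp
  moreover have "v' n' = v n" unfolding v'_def n'_def d_def using bn ab by auto
  ultimately show ?thesis using w' by blast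
qed

lemma short:
  assumes "wf E n v" "0 < n"
  shows "\<exists>n' v'. wf E n' v' \<and> 0 < n' \<and> n' \<le> N \<and> v' 0 = v 0 \<and> v' n' = v n \<and> wl c n' v' \<le> wl c n v"
  using assms
proof (induction n arbitrary: v rule: less_induct)
  case (less n)
  show ?case
  proof (cases "n \<le> N")
    case True then show ?thesis using less.prems by blast
  next
    case False
    then obtain n1 v1 where h: "wf E n1 v1" "0 < n1" "n1 < n" "v1 0 = v 0" "v1 n1 = v n" "wl c n1 v1 \<le> wl c n v"
      using short1[OF less.prems(1)] by auto
    from less.IH[OF h(3) h(1) h(2)] h show ?thesis by force
  qed
qed


definition "W0 = (\<Sum>u\<in>X. \<bar>c u\<bar>)"
definition "M = \<delta> + real N * W0"
definition "SS x y = {wl c n v | n v. 0 < n \<and> n \<le> N \<and> wf E n v \<and> v 0 = x \<and> v n = y}"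
definition "TT y = {M + wl c n v | n v. n \<le> N \<and> wf E n v \<and> v n = y}"
definition "dd x y = Min (SS x y \<union> TT y)"

lemma fin_ST: "finite (SS x y \<union> TT y)"
proof -
  define WS where "WS = (SIGMA n:{..N}. PiE {..n} (\<lambda>_. insert y X))"
  have fWS: "finite WS" unfolding WS_def using finX by (intro finite_SigmaI finite_PiE) auto
  have key: "(n, restrict v {..n}) \<in> WS \<and> wl c n (restrict v {..n}) = wl c n v"
    if "n \<le> N" "wf E n v" "v n = y" for n v
  proof
    have "v t \<in> insert y X" if "t \<le> n" for t
    proof (cases "n = 0")
      case True then show ?thesis using that \<open>v n = y\<close> by simp
    next
      case False then show ?thesis using wf_X[OF \<open>wf E n v\<close> _ that] by simp
    qed
    then show "(n, restrict v {..n}) \<in> WS" unfolding WS_def using that(1) by auto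
    show "wl c n (restrict v {..n}) = wl c n v" unfolding wl_def by (intro sum.cong) auto
  qed
  have "SS x y \<subseteq> (\<lambda>p. wl c (fst p) (snd p)) ` WS"
  proof
    fix r assume "r \<in> SS x y"
    then obtain n v where h: "r = wl c n v" "n \<le> N" "wf E n v" "v n = y" unfolding SS_def by blast
    have k: "(n, restrict v {..n}) \<in> WS" "wl c n (restrict v {..n}) = wl c n v" using key[OF h(2-4)] by auto
    show "r \<in> (\<lambda>p. wl c (fst p) (snd p)) ` WS"
      by (rule image_eqI[where x="(n, restrict v {..n})"]) (simp_all add: k h(1))
  qed
  moreover have "TT y \<subseteq> (\<lambda>p. M + wl c (fst p) (snd p)) ` WS"
  proof
    fix r assume "r \<in> TT y"
    then obtain n v where h: "r = M + wl c n v" "n \<le> N" "wf E n v" "v n = y" unfolding TT_def by blast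
    have k: "(n, restrict v {..n}) \<in> WS" "wl c n (restrict v {..n}) = wl c n v" using key[OF h(2-4)] by auto
    show "r \<in> (\<lambda>p. M + wl c (fst p) (snd p)) ` WS"
      by (rule image_eqI[where x="(n, restrict v {..n})"]) (simp_all add: k h(1))
  qed
  moreover have "finite ((\<lambda>p. wl c (fst p) (snd p)) ` WS)" "finite ((\<lambda>p. M + wl c (fst p) (snd p)) ` WS)"
    using fWS by simp_all
  ultimately show ?thesis by (simp add: finite_subset)
qed

lemma M_in: "M \<in> TT y"
proof -
  have "wf E 0 (\<lambda>_. y)" unfolding wf_def by simp
  moreover have "wl c 0 (\<lambda>_. y) = 0" unfolding wl_def by simp
  ultimately show ?thesis unfolding TT_def by force
qed

lemma dd_le: "r \<in> SS x y \<union> TT y \<Longrightarrow> dd x y \<le> r"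
  unfolding dd_def using fin_ST by (rule Min_le)

lemma dd_in: "dd x y \<in> SS x y \<union> TT y"
  unfolding dd_def using fin_ST M_in[of y] by (intro Min_in) auto

lemma wl_lb: "wf E n v \<Longrightarrow> n \<le> N \<Longrightarrow> - (real N * W0) \<le> wl c n v"
proof -
  assume w: "wf E n v" "n \<le> N"
  have W0: "0 \<le> W0" unfolding W0_def by (simp add: sum_nonneg)
  show ?thesis
  proof (cases "n = 0")
    case True then show ?thesis using W0 unfolding wl_def by simp
  next
    case False
    have "- W0 \<le> c (v t)" if "t < n" for t
    proof -
      have "v t \<in> X" using wf_X[OF w(1)] False that by simp
      then have "\<bar>c (v t)\<bar> \<le> W0" unfolding W0_def using finX by (intro member_le_sum) auto
      then show ?thesis by linarith
    qed
    then have "(\<Sum>t<n. - W0) \<le> wl c n v" unfolding wl_def by (intro sum_mono) auto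
    then have "- (real n * W0) \<le> wl c n v" by simp
    moreover have "real n * W0 \<le> real N * W0" using w(2) W0 by (intro mult_right_mono) auto
    ultimately show ?thesis by simp
  qed
qed

lemma dd_arc: "(x, y) \<in> E \<Longrightarrow> dd x y \<le> c x"
proof -
  assume e: "(x, y) \<in> E"
  define v where "v t = (if t = 0 then x else y)" for t :: nat
  have "wf E 1 v" unfolding wf_def v_def using e by simp
  moreover have "1 \<le> N" using inX[OF e] finX by (metis One_nat_def Suc_leI card_gt_0_iff empty_iff)
  moreover have "wl c 1 v = c x" unfolding wl_def v_def by simp
  ultimately have "c x \<in> SS x y" unfolding SS_def v_def by force
  then show ?thesis using dd_le by blast
qed

lemma extend_walk:
  assumes "wf E n v" "v n = y" "(y, z) \<in> E"
  shows "wf E (Suc n) (v(Suc n := z)) \<and> wl c (Suc n) (v(Suc n := z)) = wl c n v + c y"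
  using assms unfolding wf_def wl_def by (auto simp: less_Suc_eq)

lemma dd_tri: "(y, z) \<in> E \<Longrightarrow> dd x z \<le> dd x y + c y"
proof -
  assume e: "(y, z) \<in> E"
  from dd_in[of x y] show ?thesis
  proof
    assume "dd x y \<in> SS x y"
    then obtain n v where nv: "dd x y = wl c n v" "0 < n" "wf E n v" "v 0 = x" "v n = y" unfolding SS_def by blast
    from extend_walk[OF nv(3,5) e]
    have ex: "wf E (Suc n) (v(Suc n := z))" "wl c (Suc n) (v(Suc n := z)) = wl c n v + c y" by auto
    obtain n' v' where h: "wf E n' v'" "0 < n'" "n' \<le> N" "v' 0 = x" "v' n' = z" "wl c n' v' \<le> wl c n v + c y"
      using short[OF ex(1)] nv ex(2) by auto
    then have "wl c n' v' \<in> SS x z" unfolding SS_def by blast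
    then show ?thesis using dd_le[of "wl c n' v'" x z] h nv by simp
  next
    assume "dd x y \<in> TT y"
    then obtain n v where nv: "dd x y = M + wl c n v" "wf E n v" "v n = y" unfolding TT_def by blast
    from extend_walk[OF nv(2,3) e]
    have ex: "wf E (Suc n) (v(Suc n := z))" "wl c (Suc n) (v(Suc n := z)) = wl c n v + c y" by auto
    obtain n' v' where h: "wf E n' v'" "0 < n'" "n' \<le> N" "v' n' = z" "wl c n' v' \<le> wl c n v + c y"
      using short[OF ex(1)] ex(2) by auto
    then have "M + wl c n' v' \<in> TT z" unfolding TT_def by blast
    then show ?thesis using dd_le[of "M + wl c n' v'" x z] h nv by simp
  qed
qed

lemma dd_diag: "\<delta> \<le> dd x x"
proof -
  from dd_in[of x x] show ?thesis
  proof
    assume "dd x x \<in> SS x x"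
    then obtain n v where nv: "dd x x = wl c n v" "0 < n" "wf E n v" "v 0 = x" "v n = x" unfolding SS_def by blast
    then show ?thesis using closed[OF nv(3,2)] by simp
  next
    assume "dd x x \<in> TT x"
    then obtain n v where nv: "dd x x = M + wl c n v" "n \<le> N" "wf E n v" unfolding TT_def by blast
    then show ?thesis using wl_lb[OF nv(3,2)] unfolding M_def by simp
  qed
qed

end

lemma sum_double: "(\<Sum>t<2*k. f t) = (\<Sum>i<k. f (2*i) + f (Suc (2*i)))"
  for f :: "nat \<Rightarrow> real"
  by (induction k) (simp_all add: add.assoc)

lemma arc_len_E:
  "(u,v) \<in> exch_A1 X I1 B \<union> exch_A2 X I2 B \<Longrightarrow> arc_len X I1 I2 B w u v = cst B w u"
  unfolding arc_len_def cst_def exch_A1_def exch_A2_def by auto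

lemma closed_conv:
  assumes cyc: "\<forall>k xs ys. valid (\<lambda>x y. (x,y) \<in> exch_A1 X I1 B) (\<lambda>y x. (y,x) \<in> exch_A2 X I2 B) k xs ys
      \<longrightarrow> \<delta> \<le> clen (cst B w) k xs ys"
    and w: "wf (exch_A1 X I1 B \<union> exch_A2 X I2 B) n v" and n0: "0 < n" and cl: "v n = v 0"
  shows "\<delta> \<le> wl (cst B w) n v"
proof -
  define E where "E = exch_A1 X I1 B \<union> exch_A2 X I2 B"
  define R1 where "R1 = (\<lambda>x y. (x,y) \<in> exch_A1 X I1 B)"
  define R2 where "R2 = (\<lambda>y x. (y,x) \<in> exch_A2 X I2 B)"
  define c where "c = cst B w"
  have arcs: "\<And>t. t < n \<Longrightarrow> (v t, v (Suc t)) \<in> E" using w unfolding wf_def E_def by auto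
  have a1: "R1 a b" if "(a,b) \<in> E" "a \<in> B" for a b using that unfolding E_def R1_def exch_A2_def by auto
  have a2: "R2 a b" if "(a,b) \<in> E" "a \<notin> B" for a b using that unfolding E_def R2_def exch_A1_def by auto
  have flip: "v (Suc t) \<in> B \<longleftrightarrow> v t \<notin> B" if "t < n" for t
    using arcs[OF that] unfolding E_def exch_A1_def exch_A2_def by auto
  have par: "v t \<in> B \<longleftrightarrow> (v 0 \<in> B \<longleftrightarrow> even t)" if "t \<le> n" for t
    using that
  proof (induction t)
    case 0 then show ?case by simp
  next
    case (Suc t) then show ?case using flip[of t] by simp
  qed
  have "even n" using par[of n] cl by (cases "v 0 \<in> B") auto
  then obtain k where nk: "n = 2 * k" by blast
  have k0: "0 < k" using n0 nk by simp
  show ?thesis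
  proof (cases "v 0 \<in> B")
    case True
    define xs where "xs i = v (2 * i)" for i
    define ys where "ys i = v (Suc (2 * i))" for i
    have "valid R1 R2 k xs ys" unfolding valid_def
    proof (intro conjI allI impI)
      show "0 < k" by fact
      fix i assume i: "i < k"
      have "v (2*i) \<in> B" using par[of "2*i"] True i nk by simp
      then show "R1 (xs i) (ys i)" using a1 arcs[of "2*i"] i nk unfolding xs_def ys_def by simp
      have "v (Suc (2*i)) \<notin> B" using par[of "Suc (2*i)"] True i nk by simp
      moreover have "xs (Suc i mod k) = v (Suc (Suc (2*i)))"
      proof (cases "Suc i < k")
        case True then show ?thesis unfolding xs_def by simp
      next
        case False then have "Suc i = k" using i by simp
        then have "Suc (Suc (2*i)) = n" "Suc i mod k = 0" using nk by simp_all
        then show ?thesis unfolding xs_def using cl by simp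
      qed
      ultimately show "R2 (ys i) (xs (Suc i mod k))" using a2 arcs[of "Suc (2*i)"] i nk unfolding ys_def by simp
    qed
    then have "\<delta> \<le> clen c k xs ys" using cyc unfolding R1_def R2_def c_def by blast
    moreover have "clen c k xs ys = wl c n v"
      unfolding clen_def wl_def xs_def ys_def nk sum_double ..
    ultimately show ?thesis unfolding c_def by simp
  next
    case False
    define xs where "xs i = v (Suc (2 * i))" for i
    define ys where "ys i = v (Suc (Suc (2 * i)))" for i
    have "valid R1 R2 k xs ys" unfolding valid_def
    proof (intro conjI allI impI)
      show "0 < k" by fact
      fix i assume i: "i < k"
      have "v (Suc (2*i)) \<in> B" using par[of "Suc (2*i)"] False i nk by simp
      then show "R1 (xs i) (ys i)" using a1 arcs[of "Suc (2*i)"] i nk unfolding xs_def ys_def by simp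
      show "R2 (ys i) (xs (Suc i mod k))"
      proof (cases "Suc i < k")
        case True
        have "v (Suc (Suc (2*i))) \<notin> B" using par[of "Suc (Suc (2*i))"] False True nk by simp
        moreover have "xs (Suc i mod k) = v (Suc (Suc (Suc (2*i))))" using True unfolding xs_def by simp
        ultimately show ?thesis using a2 arcs[of "Suc (Suc (2*i))"] True nk unfolding ys_def by simp
      next
        case F: False then have "Suc i = k" using i by simp
        then have "Suc (Suc (2*i)) = n" using nk by simp
        then have "ys i = v 0" "xs (Suc i mod k) = v 1" unfolding xs_def ys_def using cl \<open>Suc i = k\<close> by auto
        then show ?thesis using a2 arcs[of 0] False n0 by simp
      qed
    qed
    then have "\<delta> \<le> clen c k xs ys" using cyc unfolding R1_def R2_def c_def by blast
    moreover have "clen c k xs ys = wl c n v"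
    proof -
      have "clen c k xs ys = (\<Sum>t<n. c (v (Suc t)))"
        unfolding clen_def xs_def ys_def nk sum_double[where f="\<lambda>t. c (v (Suc t))" and k=k] ..
      also have "\<dots> = wl c n v"
      proof -
        have "(\<Sum>t<Suc n. c (v t)) = c (v 0) + (\<Sum>t<n. c (v (Suc t)))" by (rule sum.lessThan_Suc_shift)
        moreover have "(\<Sum>t<Suc n. c (v t)) = (\<Sum>t<n. c (v t)) + c (v n)" by simp
        ultimately show ?thesis unfolding wl_def using cl by simp
      qed
      finally show ?thesis .
    qed
    ultimately show ?thesis unfolding c_def by simp
  qed
qed


theorem mainTheorem4:
  fixes X :: "'a set" and I1 I2 :: "'a set set" and B :: "'a set"
    and \<delta> :: real and w' :: "'a \<Rightarrow> real"
  assumes "finite X"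
    and "matroid X I1" and "matroid X I2"
    and "common_basis I1 I2 B"
    and "\<delta> \<ge> 0"
    and "\<forall>x\<in>X. w' x \<ge> 0"
  shows "delta_optimal I1 I2 w' \<delta> B \<longleftrightarrow>
    (\<exists>d :: 'a \<Rightarrow> 'a \<Rightarrow> real.
       (\<forall>(x, y) \<in> exch_A1 X I1 B \<union> exch_A2 X I2 B. d x y \<le> arc_len X I1 I2 B w' x y) \<and>
       (\<forall>x\<in>X. \<forall>(y, z) \<in> exch_A1 X I1 B \<union> exch_A2 X I2 B.
           d x z \<le> d x y + arc_len X I1 I2 B w' y z) \<and>
       (\<forall>x\<in>X. d x x \<ge> \<delta>))" (is "?lhs \<longleftrightarrow> ?rhs")
proof
  assume opt: "delta_optimal I1 I2 w' \<delta> B"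
  define E where "E = exch_A1 X I1 B \<union> exch_A2 X I2 B"
  note cyc = cycles_ge[OF assms(2,3,4,5) opt]
  have "B \<in> I1" using assms(4) unfolding common_basis_def basis_def by blast
  then have BX: "B \<subseteq> X" using matr.sub[OF matr.intro[OF assms(2)]] by blast
  interpret W: wk E X "cst B w'" \<delta>
  proof
    show "\<And>u v. (u, v) \<in> E \<Longrightarrow> u \<in> X \<and> v \<in> X"
      unfolding E_def exch_A1_def exch_A2_def using BX by auto
    show "finite X" by fact
    show "0 \<le> \<delta>" by fact
    fix n v assume "wf E n v" "0 < n" "v n = v 0"
    then show "\<delta> \<le> wl (cst B w') n v" unfolding E_def by (rule closed_conv[OF cyc])
  qed
  show "\<exists>d :: 'a \<Rightarrow> 'a \<Rightarrow> real.
       (\<forall>(x, y) \<in> exch_A1 X I1 B \<union> exch_A2 X I2 B. d x y \<le> arc_len X I1 I2 B w' x y) \<and>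
       (\<forall>x\<in>X. \<forall>(y, z) \<in> exch_A1 X I1 B \<union> exch_A2 X I2 B.
           d x z \<le> d x y + arc_len X I1 I2 B w' y z) \<and>
       (\<forall>x\<in>X. d x x \<ge> \<delta>)"
  proof (intro exI[of _ W.dd] conjI ballI)
    fix p assume p: "p \<in> exch_A1 X I1 B \<union> exch_A2 X I2 B"
    obtain a b where ab: "p = (a, b)" by (cases p)
    have "W.dd a b \<le> cst B w' a" using W.dd_arc p ab unfolding E_def by blast
    moreover have "arc_len X I1 I2 B w' a b = cst B w' a" using arc_len_E[of a b X I1 B I2 w'] p ab by blast
    ultimately show "case p of (x, y) \<Rightarrow> W.dd x y \<le> arc_len X I1 I2 B w' x y" using ab by simp
  next
    fix x p assume x: "x \<in> X" and p: "p \<in> exch_A1 X I1 B \<union> exch_A2 X I2 B"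
    obtain a b where ab: "p = (a, b)" by (cases p)
    have "W.dd x b \<le> W.dd x a + cst B w' a" using W.dd_tri p ab unfolding E_def by blast
    moreover have "arc_len X I1 I2 B w' a b = cst B w' a" using arc_len_E[of a b X I1 B I2 w'] p ab by blast
    ultimately show "case p of (y, z) \<Rightarrow> W.dd x z \<le> W.dd x y + arc_len X I1 I2 B w' y z" using ab by simp
  next
    fix x assume "x \<in> X"
    show "\<delta> \<le> W.dd x x" by (rule W.dd_diag)
  qed
next
  assume ?rhs
  then obtain d :: "'a \<Rightarrow> 'a \<Rightarrow> real" where h:
    "(\<forall>(x, y) \<in> exch_A1 X I1 B \<union> exch_A2 X I2 B. d x y \<le> arc_len X I1 I2 B w' x y) \<and>
     (\<forall>x\<in>X. \<forall>(y, z) \<in> exch_A1 X I1 B \<union> exch_A2 X I2 B. d x z \<le> d x y + arc_len X I1 I2 B w' y z) \<and>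
     (\<forall>x\<in>X. d x x \<ge> \<delta>)" by (elim exE)
  show "delta_optimal I1 I2 w' \<delta> B"
    by (rule dir2[OF assms(2,3,4) conjunct1[OF h] conjunct1[OF conjunct2[OF h]] conjunct2[OF conjunct2[OF h]]])
qed

end
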